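(* Let $S$ be a finite set of endomorphisms of $\mathbb{P}^N$, all of degree at least $2$, let $C_S:=\max\{\sup_{\phi\in S}C(\phi),1\}$, let $K/\mathbb{Q}$ be a finite extension over which every map in $S$ is defined, let $P\in\mathbb{P}^N(K)$, and let $F_{P,S}:=\{Q\in\mathrm{Orb}_S(P):h(Q)\leq 2C_S\}$. Then $\phi(\mathrm{Orb}_S(P)\setminus F_{P,S})\subseteq\mathrm{Orb}_S(P)\setminus F_{P,S}$ for all $\phi\in S$.
   Context: $h$ is the absolute Weil height on $\mathbb{P}^N(\overline{\mathbb{Q}})$. For an endomorphism $\phi$ of degree $d_\phi$, $C(\phi)=\sup_{Q\in\mathbb{P}^N(\overline{\mathbb{Q}})}|h(\phi(Q))-d_\phi h(Q)|$. $\mathrm{Orb}_S(P)=\{\rho(P):\rho\in M_S\}$, where $M_S$ is the monoid of the identity and all finite compositions of elements of $S$. *)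

theory Defs
  imports Complex_Main "HOL-Computational_Algebra.Polynomial" "HOL-Library.Extended_Real"
begin

text \<open>A representative of a point of P^N(Qbar): a nonzero vector (x_0,...,x_N) of
  algebraic numbers, encoded as a function nat => complex vanishing beyond N.\<close>
definition qbar_vec :: "nat \<Rightarrow> (nat \<Rightarrow> complex) \<Rightarrow> bool" where
  "qbar_vec N x \<longleftrightarrow> (\<forall>i\<le>N. algebraic (x i)) \<and> (\<forall>i>N. x i = 0) \<and> (\<exists>i\<le>N. x i \<noteq> 0)"

definition proj_class :: "nat \<Rightarrow> (nat \<Rightarrow> complex) \<Rightarrow> (nat \<Rightarrow> complex) set" where
  "proj_class N x = {y. qbar_vec N y \<and> (\<exists>c. c \<noteq> 0 \<and> (\<forall>i. y i = c * x i))}"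

definition PN :: "nat \<Rightarrow> (nat \<Rightarrow> complex) set set" where
  "PN N = {proj_class N x | x. qbar_vec N x}"

definition rat_span :: "complex set \<Rightarrow> complex set" where
  "rat_span B = {(\<Sum>b\<in>B. of_rat (q b) * b) | q. True}"

definition number_field :: "complex set \<Rightarrow> bool" where
  "number_field K \<longleftrightarrow> 0 \<in> K \<and> 1 \<in> K \<and>
     (\<forall>a\<in>K. \<forall>b\<in>K. a + b \<in> K \<and> a * b \<in> K) \<and>
     (\<forall>a\<in>K. - a \<in> K) \<and> (\<forall>a\<in>K. a \<noteq> 0 \<longrightarrow> inverse a \<in> K) \<and>
     (\<exists>B. finite B \<and> B \<subseteq> K \<and> K = rat_span B)"

definition field_degree :: "complex set \<Rightarrow> nat" where
  "field_degree K = (LEAST n. \<exists>B. finite B \<and> B \<subseteq> K \<and> card B = n \<and> K = rat_span B)"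

text \<open>Field embeddings K -> C (extended by 0 outside K, so that they are unique as functions).\<close>
definition embeddings :: "complex set \<Rightarrow> (complex \<Rightarrow> complex) set" where
  "embeddings K = {\<sigma>. (\<forall>a\<in>K. \<forall>b\<in>K. \<sigma> (a + b) = \<sigma> a + \<sigma> b \<and> \<sigma> (a * b) = \<sigma> a * \<sigma> b)
      \<and> \<sigma> 1 = 1 \<and> (\<forall>z. z \<notin> K \<longrightarrow> \<sigma> z = 0)}"

definition ring_of_integers :: "complex set \<Rightarrow> complex set" where
  "ring_of_integers K = {z \<in> K. algebraic_int z}"

definition coord_ideal :: "complex set \<Rightarrow> nat \<Rightarrow> (nat \<Rightarrow> complex) \<Rightarrow> complex set" where
  "coord_ideal K N x = {(\<Sum>i\<le>N. a i * x i) | a. \<forall>i\<le>N. a i \<in> ring_of_integers K}"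

definition ideal_norm :: "complex set \<Rightarrow> complex set \<Rightarrow> nat" where
  "ideal_norm K I = card ((\<lambda>a. {a + b | b. b \<in> I}) ` ring_of_integers K)"

text \<open>The archimedean places are accounted for by the embeddings (complex places twice, i.e. n_v = 2),
  and the non-archimedean contribution sum_v n_v log max_i |x_i|_v equals - log N(ideal).\<close>
definition weil_height_K :: "complex set \<Rightarrow> nat \<Rightarrow> (nat \<Rightarrow> complex) \<Rightarrow> real" where
  "weil_height_K K N x =
     ((\<Sum>\<sigma>\<in>embeddings K. ln (Max ((\<lambda>i. cmod (\<sigma> (x i))) ` {..N})))
       - ln (real (ideal_norm K (coord_ideal K N x)))) / real (field_degree K)"

text \<open>Absolute Weil height of a point of P^N(Qbar), computed from any integral representative
  and any number field containing its coordinates (the value is independent of these choices).\<close>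
definition weil_height :: "nat \<Rightarrow> (nat \<Rightarrow> complex) set \<Rightarrow> real" where
  "weil_height N Q =
     (let x = (SOME x. x \<in> Q \<and> (\<forall>i\<le>N. algebraic_int (x i)));
          K = (SOME K. number_field K \<and> (\<forall>i\<le>N. x i \<in> K))
      in weil_height_K K N x)"

definition point_over :: "nat \<Rightarrow> complex set \<Rightarrow> (nat \<Rightarrow> complex) set \<Rightarrow> bool" where
  "point_over N K Q \<longleftrightarrow> (\<exists>x\<in>Q. \<forall>i\<le>N. x i \<in> K)"

definition hmonos :: "nat \<Rightarrow> nat \<Rightarrow> (nat \<Rightarrow> nat) set" where
  "hmonos N d = {e. (\<forall>i>N. e i = 0) \<and> (\<Sum>i\<le>N. e i) = d}"

text \<open>A homogeneous polynomial of degree d is a coefficient function on hmonos N d.\<close>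
definition hpoly_eval :: "nat \<Rightarrow> nat \<Rightarrow> ((nat \<Rightarrow> nat) \<Rightarrow> complex) \<Rightarrow> (nat \<Rightarrow> complex) \<Rightarrow> complex" where
  "hpoly_eval N d c x = (\<Sum>e\<in>hmonos N d. c e * (\<Prod>i\<le>N. x i ^ e i))"

text \<open>An endomorphism of degree d: a tuple (F_0,...,F_N) of homogeneous polynomials of degree d
  with algebraic coefficients and no common nontrivial zero in Qbar^(N+1).\<close>
type_synonym endo = "nat \<times> (nat \<Rightarrow> (nat \<Rightarrow> nat) \<Rightarrow> complex)"

definition endo_deg :: "endo \<Rightarrow> nat" where
  "endo_deg \<phi> = fst \<phi>"

definition is_endo :: "nat \<Rightarrow> endo \<Rightarrow> bool" where
  "is_endo N \<phi> \<longleftrightarrow> (let d = fst \<phi>; F = snd \<phi> in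
     (\<forall>i e. algebraic (F i e)) \<and> (\<forall>i e. e \<notin> hmonos N d \<longrightarrow> F i e = 0) \<and>
     (\<forall>i>N. \<forall>e. F i e = 0) \<and>
     (\<forall>x. qbar_vec N x \<longrightarrow> (\<exists>i\<le>N. hpoly_eval N d (F i) x \<noteq> 0)))"

definition endo_over :: "complex set \<Rightarrow> endo \<Rightarrow> bool" where
  "endo_over K \<phi> \<longleftrightarrow> (\<exists>c. c \<noteq> 0 \<and> (\<forall>i e. c * snd \<phi> i e \<in> K))"

definition endo_app :: "nat \<Rightarrow> endo \<Rightarrow> (nat \<Rightarrow> complex) set \<Rightarrow> (nat \<Rightarrow> complex) set" where
  "endo_app N \<phi> Q = proj_class N
     (\<lambda>i. if i \<le> N then hpoly_eval N (fst \<phi>) (snd \<phi> i) (SOME x. x \<in> Q) else 0)"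

definition height_const :: "nat \<Rightarrow> endo \<Rightarrow> ereal" where
  "height_const N \<phi> = (SUP Q\<in>PN N.
      ereal \<bar>weil_height N (endo_app N \<phi> Q) - real (endo_deg \<phi>) * weil_height N Q\<bar>)"

definition height_const_set :: "nat \<Rightarrow> endo set \<Rightarrow> ereal" where
  "height_const_set N S = max (SUP \<phi>\<in>S. height_const N \<phi>) 1"

inductive_set comp_monoid :: "nat \<Rightarrow> endo set \<Rightarrow> ((nat \<Rightarrow> complex) set \<Rightarrow> (nat \<Rightarrow> complex) set) set"
  for N S where
  id_in: "id \<in> comp_monoid N S"
| comp_in: "\<rho> \<in> comp_monoid N S \<Longrightarrow> \<phi> \<in> S \<Longrightarrow> (endo_app N \<phi> \<circ> \<rho>) \<in> comp_monoid N S"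

definition orbit :: "nat \<Rightarrow> endo set \<Rightarrow> (nat \<Rightarrow> complex) set \<Rightarrow> (nat \<Rightarrow> complex) set set" where
  "orbit N S P = {\<rho> P | \<rho>. \<rho> \<in> comp_monoid N S}"

definition small_orbit :: "nat \<Rightarrow> endo set \<Rightarrow> (nat \<Rightarrow> complex) set \<Rightarrow> (nat \<Rightarrow> complex) set set" where
  "small_orbit N S P = {Q \<in> orbit N S P. ereal (weil_height N Q) \<le> 2 * height_const_set N S}"

end

theory Submission
  imports Defs "HOL-Algebra.Finite_Extensions"
begin

definition CR :: "complex ring" where
  "CR = \<lparr>carrier = UNIV, mult = (*), one = 1, zero = 0, add = (+)\<rparr>"

lemma field_CR: "field CR"
proof -
  have "\<exists>y. x + y = 0" for x :: complex
    using add.right_inverse by blast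
  moreover have "x \<noteq> 0 \<Longrightarrow> \<exists>y. x * y = 1" for x :: complex
    by (rule exI[of _ "inverse x"]) auto
  ultimately show ?thesis
    unfolding CR_def using add.right_inverse
    by unfold_locales (auto simp:algebra_simps Units_def)
qed

lemma ring_CR: "ring CR" using field_CR by (simp add: cring.axioms(1) domain_def field_def)
lemma comm_monoid_CR: "comm_monoid CR" using field_CR by (simp add: cring_def domain_def field_def)
lemma monoid_CR: "monoid CR" using ring_CR by (simp add: ring.is_monoid)

lemma CR_simps [simp]: "carrier CR = UNIV" "mult CR = (*)" "one CR = 1" "zero CR = 0" "add CR = (+)"
  by (auto simp: CR_def)

lemma CR_pow [simp]: "x [^]\<^bsub>CR\<^esub> (n::nat) = x ^ n"
  by (induction n) (auto simp: monoid.nat_pow_Suc2[OF monoid_CR] monoid.nat_pow_0[OF monoid_CR])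

lemma CR_inv: "x \<noteq> 0 \<Longrightarrow> inv\<^bsub>CR\<^esub> x = inverse x"
  by (rule comm_monoid.comm_inv_char[OF comm_monoid_CR]) auto

lemma CR_neg: "\<ominus>\<^bsub>CR\<^esub> x = - x"
  by (rule abelian_group.minus_equality[OF ring.is_abelian_group[OF ring_CR]]) auto

lemma subfield_Rats: "subfield (\<rat>::complex set) CR"
proof (rule field.subfieldI'[OF field_CR])
  show "subring \<rat> CR"
    by (rule ring.subringI[OF ring_CR]) (auto simp: CR_neg)
  show "k \<in> \<rat> - {\<zero>\<^bsub>CR\<^esub>} \<Longrightarrow> inv\<^bsub>CR\<^esub> k \<in> \<rat>" for k
    by (auto simp: CR_inv)
qed

lemma CR_eval: "ring.eval CR p x = poly (Poly (rev p)) x"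
proof (induction p)
  case Nil
  then show ?case by (simp add: ring.eval.simps[OF ring_CR])
next
  case (Cons a p)
  have "ring.eval CR (a # p) x = a * x ^ length p + ring.eval CR p x" by (simp add: ring.eval.simps[OF ring_CR])
  also have "\<dots> = poly (Poly (rev (a # p))) x"
    by (simp add: Cons Poly_append poly_monom algebra_simps)
  finally show ?case .
qed

lemma alg_to_ring: "algebraic x \<Longrightarrow> ring.algebraic CR \<rat> x"
proof -
  assume "algebraic x"
  then obtain p where p: "\<forall>i. Polynomial.coeff p i \<in> \<rat>" "p \<noteq> 0" "poly p x = 0"
    by (auto simp: algebraic_altdef)
  let ?L = "rev (coeffs p)"
  have s1: "\<forall>c \<in> set (coeffs p). c \<in> \<rat>"
    using p(1) forall_coeffs_conv[of "\<lambda>c. c \<in> \<rat>" p] by simp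
  have s2: "hd ?L \<noteq> 0"
    using p(2) by (simp add: hd_rev last_coeffs_eq_coeff_degree)
  have "?L \<in> carrier (\<rat>[X]\<^bsub>CR\<^esub>)"
    using s1 s2 unfolding univ_poly_def polynomial_def by auto
  moreover have "?L \<noteq> []" using p by simp
  moreover have "ring.eval CR ?L x = \<zero>\<^bsub>CR\<^esub>" using p by (simp add: CR_eval)
  ultimately show ?thesis by (rule ring.algebraicI[OF ring_CR, unfolded over_def])
qed

lemma ring_to_alg: "ring.algebraic CR \<rat> x \<Longrightarrow> algebraic x"
proof -
  assume a: "ring.algebraic CR \<rat> x"
  have xc: "x \<in> carrier CR" by simp
  have dom: "domain CR" using field_CR by (rule field.axioms(1))
  have sr: "subring \<rat> CR" using subfield_Rats by (rule subfieldE(1))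
  have a': "(ring.algebraic CR over \<rat>) x" using a unfolding over_def .
  obtain L where L: "L \<in> carrier (\<rat>[X]\<^bsub>CR\<^esub>)" "L \<noteq> []" "ring.eval CR L x = \<zero>\<^bsub>CR\<^esub>"
    by (rule domain.algebraicE[OF dom sr xc a'])
  have pl: "polynomial\<^bsub>CR\<^esub> \<rat> L" using L(1) unfolding univ_poly_def by simp
  have setL: "set L \<subseteq> \<rat>" using pl L(2) unfolding polynomial_def by blast
  have hd: "hd L \<noteq> 0" using pl L(2) unfolding polynomial_def by simp
  have "Poly (rev L) \<noteq> 0"
  proof
    assume "Poly (rev L) = 0"
    then have "Polynomial.coeff (Poly (rev L)) (length (rev L) - 1) = 0" by simp
    moreover have "Polynomial.coeff (Poly (rev L)) (length (rev L) - 1) = hd (rev (rev L))"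
      using L(2) by (intro last_coeff_is_hd) simp
    ultimately show False using hd by simp
  qed
  moreover have "\<forall>i. Polynomial.coeff (Poly (rev L)) i \<in> \<rat>"
  proof
    fix i
    show "Polynomial.coeff (Poly (rev L)) i \<in> \<rat>"
    proof (cases "i < length (rev L)")
      case True
      then have "rev L ! i \<in> set L" by (metis nth_mem set_rev)
      then show ?thesis using True setL unfolding coeff_Poly_eq nth_default_def by auto
    next
      case False
      then show ?thesis unfolding coeff_Poly_eq nth_default_def by simp
    qed
  qed
  moreover have "poly (Poly (rev L)) x = 0" using L(3) by (simp add: CR_eval)
  ultimately show ?thesis by (intro algebraicI') auto
qed

lemma subring_alg: "subring {x \<in> carrier CR. \<not> ring.transcendental CR \<rat> x} CR"
  using subfieldE(1)[OF field.subfield_of_algebraics[OF field_CR subfield_Rats]] unfolding over_def .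

lemma algebraic_add: "algebraic x \<Longrightarrow> algebraic y \<Longrightarrow> algebraic (x + y :: complex)"
proof -
  assume "algebraic x" "algebraic y"
  then have "x \<oplus>\<^bsub>CR\<^esub> y \<in> {x \<in> carrier CR. \<not> ring.transcendental CR \<rat> x}"
    using subringE(7)[OF subring_alg, of x y] alg_to_ring by auto
  then show ?thesis by (auto intro: ring_to_alg)
qed

lemma algebraic_mult: "algebraic x \<Longrightarrow> algebraic y \<Longrightarrow> algebraic (x * y :: complex)"
proof -
  assume "algebraic x" "algebraic y"
  then have "x \<otimes>\<^bsub>CR\<^esub> y \<in> {x \<in> carrier CR. \<not> ring.transcendental CR \<rat> x}"
    using subringE(6)[OF subring_alg, of x y] alg_to_ring by auto
  then show ?thesis by (auto intro: ring_to_alg)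
qed


lemma alg_sum: "(\<And>x. x \<in> A \<Longrightarrow> algebraic (f x :: complex)) \<Longrightarrow> algebraic (sum f A)"
proof (induction A rule: infinite_finite_induct)
  case (insert x F)
  have "algebraic (f x)" using insert.prems by blast
  moreover have "algebraic (sum f F)" using insert.prems by (intro insert.IH) blast
  ultimately have "algebraic (f x + sum f F)" by (rule algebraic_add)
  then show ?case using insert.hyps by simp
qed simp_all

lemma alg_prod: "(\<And>x. x \<in> A \<Longrightarrow> algebraic (f x :: complex)) \<Longrightarrow> algebraic (prod f A)"
proof (induction A rule: infinite_finite_induct)
  case (insert x F)
  have "algebraic (f x)" using insert.prems by blast
  moreover have "algebraic (prod f F)" using insert.prems by (intro insert.IH) blast
  ultimately have "algebraic (f x * prod f F)" by (rule algebraic_mult)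
  then show ?case using insert.hyps by simp
qed (simp_all add: algebraic_int_imp_algebraic)

lemma alg_power: "algebraic (x :: complex) \<Longrightarrow> algebraic (x ^ n)"
  by (induction n) (simp_all add: algebraic_mult algebraic_int_imp_algebraic)

lemma endo_app_PN:
  assumes "is_endo N \<phi>" "Q \<in> PN N"
  shows "endo_app N \<phi> Q \<in> PN N"
proof -
  obtain x where Q: "Q = proj_class N x" and x: "qbar_vec N x"
    using assms(2) unfolding PN_def by auto
  have "x \<in> Q" using x unfolding Q proj_class_def by (auto intro!: exI[of _ 1])
  define y where "y = (SOME x. x \<in> Q)"
  have "y \<in> Q" unfolding y_def using \<open>x \<in> Q\<close> by (rule someI[of "\<lambda>x. x \<in> Q"])
  then have y: "qbar_vec N y" unfolding Q proj_class_def by auto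
  define v where "v = (\<lambda>i. if i \<le> N then hpoly_eval N (fst \<phi>) (snd \<phi> i) y else 0)"
  have E: "\<forall>i e. algebraic (snd \<phi> i e)"
    "\<forall>x. qbar_vec N x \<longrightarrow> (\<exists>i\<le>N. hpoly_eval N (fst \<phi>) (snd \<phi> i) x \<noteq> 0)"
    using assms(1) unfolding is_endo_def Let_def by auto
  have "qbar_vec N v"
    unfolding qbar_vec_def
  proof (intro conjI allI impI)
    fix i assume "i \<le> N"
    have "algebraic (hpoly_eval N (fst \<phi>) (snd \<phi> i) y)"
      unfolding hpoly_eval_def
      using E(1) y unfolding qbar_vec_def
      by (intro alg_sum algebraic_mult alg_prod alg_power) auto
    then show "algebraic (v i)" using \<open>i \<le> N\<close> by (simp add: v_def)
  next
    fix i assume "N < i" then show "v i = 0" by (simp add: v_def)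
  next
    show "\<exists>i\<le>N. v i \<noteq> 0" using E(2) y by (auto simp: v_def)
  qed
  moreover have "endo_app N \<phi> Q = proj_class N v"
    unfolding endo_app_def v_def y_def ..
  ultimately show ?thesis unfolding PN_def by auto
qed

lemma orbit_PN:
  assumes "\<rho> \<in> comp_monoid N S" "\<forall>\<phi>\<in>S. is_endo N \<phi>" "P \<in> PN N"
  shows "\<rho> P \<in> PN N"
  using assms(1)
proof (induction rule: comp_monoid.induct)
  case id_in
  then show ?case using assms(3) by simp
next
  case (comp_in \<rho> \<phi>)
  then show ?case using assms(2) endo_app_PN by auto
qed

theorem lemma4p2:
  fixes N :: nat and S :: "endo set" and K :: "complex set" and P :: "(nat \<Rightarrow> complex) set"
  assumes "finite S"
    and "\<forall>\<phi>\<in>S. is_endo N \<phi> \<and> endo_deg \<phi> \<ge> 2"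
    and "number_field K"
    and "\<forall>\<phi>\<in>S. endo_over K \<phi>"
    and "P \<in> PN N" and "point_over N K P"
  shows "\<forall>\<phi>\<in>S. endo_app N \<phi> ` (orbit N S P - small_orbit N S P)
                  \<subseteq> orbit N S P - small_orbit N S P"
proof (intro ballI subsetI)
  fix \<phi> Q' assume phi: "\<phi> \<in> S" and "Q' \<in> endo_app N \<phi> ` (orbit N S P - small_orbit N S P)"
  then obtain Q where QO: "Q \<in> orbit N S P" and QS: "Q \<notin> small_orbit N S P"
    and Q': "Q' = endo_app N \<phi> Q" by blast
  obtain \<rho> where rho: "\<rho> \<in> comp_monoid N S" and Q: "Q = \<rho> P"
    using QO unfolding orbit_def by blast
  have rm: "(endo_app N \<phi> \<circ> \<rho>) \<in> comp_monoid N S" using rho phi by (rule comp_monoid.comp_in)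
  have "Q' = (endo_app N \<phi> \<circ> \<rho>) P" unfolding Q' Q by simp
  then have Q'O: "Q' \<in> orbit N S P" unfolding orbit_def using rm by blast
  have en: "\<forall>\<phi>\<in>S. is_endo N \<phi>" using assms(2) by blast
  have QPN: "Q \<in> PN N" unfolding Q using rho en assms(5) by (rule orbit_PN)
  define C where "C = height_const_set N S"
  have "\<not> ereal (weil_height N Q) \<le> 2 * C"
    using QS QO unfolding small_orbit_def C_def by blast
  then have hQ: "2 * C < ereal (weil_height N Q)" by (simp add: not_le)
  have C1: "1 \<le> C" unfolding C_def height_const_set_def by (rule max.cobounded2)
  obtain c where c: "C = ereal c"
  proof (cases C)
    case (real r) then show ?thesis by (rule that)
  next
    case PInf then show ?thesis using hQ by simp
  next
    case MInf then show ?thesis using C1 by simp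
  qed
  have c1: "c \<ge> 1" using C1 c by simp
  have hQc: "weil_height N Q > 2 * c" using hQ c by simp
  have "height_const N \<phi> \<le> (SUP \<phi>\<in>S. height_const N \<phi>)" using phi by (rule SUP_upper)
  also have "\<dots> \<le> C" unfolding C_def height_const_set_def by (rule max.cobounded1)
  finally have hc: "height_const N \<phi> \<le> ereal c" using c by simp
  have "ereal \<bar>weil_height N Q' - real (endo_deg \<phi>) * weil_height N Q\<bar> \<le> height_const N \<phi>"
    unfolding height_const_def Q' using QPN by (rule SUP_upper)
  then have "ereal \<bar>weil_height N Q' - real (endo_deg \<phi>) * weil_height N Q\<bar> \<le> ereal c"
    using hc by (rule order_trans)
  then have ab: "\<bar>weil_height N Q' - real (endo_deg \<phi>) * weil_height N Q\<bar> \<le> c"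
    by simp
  have d2: "real (endo_deg \<phi>) \<ge> 2" using assms(2) phi by auto
  have hpos: "weil_height N Q \<ge> 0" using hQc c1 by linarith
  have "real (endo_deg \<phi>) * weil_height N Q \<ge> 2 * weil_height N Q"
    using d2 hpos by (rule mult_right_mono)
  then have "weil_height N Q' > 2 * c" using ab hQc c1 by linarith
  then have "\<not> ereal (weil_height N Q') \<le> 2 * C" using c by simp
  then show "Q' \<in> orbit N S P - small_orbit N S P"
    using Q'O unfolding small_orbit_def C_def by blast
qed

end
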